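(* Let $X$ be a non-empty finite set and let $f,g\colon X\to X$ be maps. Then $d_X(f\circ g,\mathrm{Id}_X)=d_X(g\circ f,\mathrm{Id}_X)$.
   Context: $d_X$ denotes the Hamming metric on maps $X\to X$: $d_X(h,k)=|\{x\in X : h(x)\ne k(x)\}|/|X|$. *)

theory Defs
  imports Main Complex_Main
begin

definition hamming_dist :: "'a set \<Rightarrow> ('a \<Rightarrow> 'a) \<Rightarrow> ('a \<Rightarrow> 'a) \<Rightarrow> real" where
  "hamming_dist X h k = real (card {x \<in> X. h x \<noteq> k x}) / real (card X)"

end

theory Submission
  imports Defs
begin

theorem lemma5p2:
  fixes X :: "'a set" and f g :: "'a \<Rightarrow> 'a"
  assumes "finite X" and "X \<noteq> {}"
    and "f ` X \<subseteq> X" and "g ` X \<subseteq> X"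
  shows "hamming_dist X (f \<circ> g) id = hamming_dist X (g \<circ> f) id"
proof -
  let ?A = "{x \<in> X. f (g x) = x}" and ?B = "{x \<in> X. g (f x) = x}"
  have "bij_betw g ?A ?B"
    by (rule bij_betw_byWitness[where f'=f]) (use assms(3,4) in auto)
  hence cAB: "card ?A = card ?B" by (rule bij_betw_same_card)
  have e1: "{x \<in> X. (f \<circ> g) x \<noteq> id x} = X - ?A" by auto
  have e2: "{x \<in> X. (g \<circ> f) x \<noteq> id x} = X - ?B" by auto
  have "card (X - ?A) = card (X - ?B)"
    using cAB assms(1) by (simp add: card_Diff_subset finite_subset)
  thus ?thesis unfolding hamming_dist_def e1 e2 by simp
qed

end
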